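(* Let $G$ be a finite simple graph, $r\geqslant 1$, let $\mathcal{C}$ be a minimal $r$-system of chorded cycles in $G$, and let $C\in\mathcal{C}$. Suppose $u$ is a vertex of $G$ not lying on any cycle of $\mathcal{C}$ with $d_C(u)\geqslant 3$. Then one of the following holds: (1) $|V(C)|=4$ and $d_C(u)\in\{3,4\}$; (2) $|V(C)|=5$, $d_C(u)=3$, and two of the vertices of $N_C(u)$ are both at distance $2$ on $C$ from the third vertex of $N_C(u)$; (3) $|V(C)|=6$, $d_C(u)=3$, and for every vertex $v$ not lying on any cycle of $\mathcal{C}$, the subgraph of $G$ induced by $V(C)\cup\{v\}$ is triangle-free.
   Context: A chorded cycle is a cycle together with an edge of the graph, not on the cycle, joining two vertices of the cycle. A minimal $r$-system of chorded cycles in $G$ is a collection of $r$ pairwise vertex-disjoint chorded cycles of $G$ whose total number of vertices is as small as possible among all such collections. $N_C(u)=N_G(u)\cap V(C)$ and $d_C(u)=|N_C(u)|$; distance on $C$ means distance in the cycle $C$ itself. *)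

theory Defs
  imports Main
begin

definition simple_graph :: "'a set \<Rightarrow> ('a \<Rightarrow> 'a \<Rightarrow> bool) \<Rightarrow> bool" where
  "simple_graph V E \<longleftrightarrow> finite V \<and> (\<forall>x y. E x y \<longrightarrow> E y x) \<and> (\<forall>x. \<not> E x x)
     \<and> (\<forall>x y. E x y \<longrightarrow> x \<in> V \<and> y \<in> V)"

definition is_cycle :: "'a set \<Rightarrow> ('a \<Rightarrow> 'a \<Rightarrow> bool) \<Rightarrow> 'a list \<Rightarrow> bool" where
  "is_cycle V E cs \<longleftrightarrow> length cs \<ge> 3 \<and> distinct cs \<and> set cs \<subseteq> V
     \<and> (\<forall>i < length cs. E (cs ! i) (cs ! ((i + 1) mod length cs)))"

definition idx_dist :: "nat \<Rightarrow> nat \<Rightarrow> nat \<Rightarrow> nat" where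
  "idx_dist k i j = (let d = (if i \<le> j then j - i else i - j) in min d (k - d))"

definition cyc_dist :: "'a list \<Rightarrow> 'a \<Rightarrow> 'a \<Rightarrow> nat" where
  "cyc_dist cs x y = idx_dist (length cs)
     (THE i. i < length cs \<and> cs ! i = x) (THE j. j < length cs \<and> cs ! j = y)"

text \<open>A chorded cycle: a cycle plus an edge of G, not on the cycle, joining two of its vertices
  (for distinct positions, the pair is a cycle edge iff its cyclic distance is 1).\<close>
definition chorded_cycle :: "'a set \<Rightarrow> ('a \<Rightarrow> 'a \<Rightarrow> bool) \<Rightarrow> 'a list \<Rightarrow> bool" where
  "chorded_cycle V E cs \<longleftrightarrow> is_cycle V E cs \<and>
     (\<exists>i < length cs. \<exists>j < length cs. E (cs ! i) (cs ! j) \<and> idx_dist (length cs) i j \<ge> 2)"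

definition r_system :: "'a set \<Rightarrow> ('a \<Rightarrow> 'a \<Rightarrow> bool) \<Rightarrow> nat \<Rightarrow> 'a list list \<Rightarrow> bool" where
  "r_system V E r Cs \<longleftrightarrow> length Cs = r \<and> (\<forall>C \<in> set Cs. chorded_cycle V E C)
     \<and> (\<forall>i < r. \<forall>j < r. i \<noteq> j \<longrightarrow> set (Cs ! i) \<inter> set (Cs ! j) = {})"

definition minimal_r_system :: "'a set \<Rightarrow> ('a \<Rightarrow> 'a \<Rightarrow> bool) \<Rightarrow> nat \<Rightarrow> 'a list list \<Rightarrow> bool" where
  "minimal_r_system V E r Cs \<longleftrightarrow> r_system V E r Cs \<and>
     (\<forall>Cs'. r_system V E r Cs' \<longrightarrow> sum_list (map length Cs) \<le> sum_list (map length Cs'))"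

definition nbhd_on :: "('a \<Rightarrow> 'a \<Rightarrow> bool) \<Rightarrow> 'a list \<Rightarrow> 'a \<Rightarrow> 'a set" where
  "nbhd_on E cs u = {x \<in> set cs. E u x}"

definition triangle_free_on :: "('a \<Rightarrow> 'a \<Rightarrow> bool) \<Rightarrow> 'a set \<Rightarrow> bool" where
  "triangle_free_on E S \<longleftrightarrow> \<not> (\<exists>x\<in>S. \<exists>y\<in>S. \<exists>z\<in>S. E x y \<and> E y z \<and> E x z)"

end

theory Submission
  imports Defs
begin


lemma cyc4:
  assumes "distinct [a,b,c,d]" "set [a,b,c,d] \<subseteq> V" "E a b" "E b c" "E c d" "E d a" "E a c"
  shows "chorded_cycle V E [a,b,c,d]"
proof -
  have 1: "is_cycle V E [a,b,c,d]"
    unfolding is_cycle_def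
  proof (intro conjI allI impI)
    fix i assume "i < length [a,b,c,d]"
    then have "i = 0 \<or> i = 1 \<or> i = 2 \<or> i = 3" by auto
    then show "E ([a,b,c,d] ! i) ([a,b,c,d] ! ((i + 1) mod length [a,b,c,d]))"
      using assms by (elim disjE) simp_all
  qed (use assms in simp_all)
  have 2: "idx_dist (length [a,b,c,d]) 0 2 \<ge> 2" by (simp add: idx_dist_def)
  have 3: "E ([a,b,c,d]!0) ([a,b,c,d]!2)" using assms by (simp add: numeral_eq_Suc)
  have 4: "(0::nat) < length [a,b,c,d]" "(2::nat) < length [a,b,c,d]" by simp_all
  show ?thesis unfolding chorded_cycle_def using 1 2 3 4 by blast
qed

lemma cyc5:
  assumes "distinct [a,b,c,d,e]" "set [a,b,c,d,e] \<subseteq> V" "E a b" "E b c" "E c d" "E d e" "E e a" "E b d"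
  shows "chorded_cycle V E [a,b,c,d,e]"
proof -
  have 1: "is_cycle V E [a,b,c,d,e]"
    unfolding is_cycle_def
  proof (intro conjI allI impI)
    fix i assume "i < length [a,b,c,d,e]"
    then have "i = 0 \<or> i = 1 \<or> i = 2 \<or> i = 3 \<or> i = 4" by auto
    then show "E ([a,b,c,d,e] ! i) ([a,b,c,d,e] ! ((i + 1) mod length [a,b,c,d,e]))"
      using assms by (elim disjE) simp_all
  qed (use assms in simp_all)
  have 2: "idx_dist (length [a,b,c,d,e]) 1 3 \<ge> 2" by (simp add: idx_dist_def)
  have 3: "E ([a,b,c,d,e]!1) ([a,b,c,d,e]!3)" using assms by (simp add: numeral_eq_Suc)
  have 4: "(1::nat) < length [a,b,c,d,e]" "(3::nat) < length [a,b,c,d,e]" by simp_all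
  show ?thesis unfolding chorded_cycle_def using 1 2 3 4 by blast
qed


lemma tri:
  assumes symE: "\<And>x y. E x y = E y x" and irr: "\<And>x. \<not> E x x"
  and n: "\<not> E a0 a2" "\<not> E a2 a4" "\<not> E a4 a0" "\<not> E a1 a3" "\<not> E a3 a5" "\<not> E a5 a1"
  and v: "\<not> (E v a0 \<and> E v a1)" "\<not> (E v a1 \<and> E v a2)" "\<not> (E v a2 \<and> E v a3)"
     "\<not> (E v a3 \<and> E v a4)" "\<not> (E v a4 \<and> E v a5)" "\<not> (E v a5 \<and> E v a0)"
  and w: "\<not> (E v a0 \<and> E v a3 \<and> E a0 a3)" "\<not> (E v a1 \<and> E v a4 \<and> E a1 a4)" "\<not> (E v a2 \<and> E v a5 \<and> E a2 a5)"
  and x: "x \<in> {a0,a1,a2,a3,a4,a5,v}" and y: "y \<in> {a0,a1,a2,a3,a4,a5,v}" and z: "z \<in> {a0,a1,a2,a3,a4,a5,v}"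
  and e: "E x y" "E y z" "E x z"
  shows False
proof -
  have ord: "E a1 a0 = E a0 a1" "E a2 a0 = E a0 a2" "E a3 a0 = E a0 a3" "E a4 a0 = E a0 a4" "E a5 a0 = E a0 a5"
    "E a2 a1 = E a1 a2" "E a3 a1 = E a1 a3" "E a4 a1 = E a1 a4" "E a5 a1 = E a1 a5"
    "E a3 a2 = E a2 a3" "E a4 a2 = E a2 a4" "E a5 a2 = E a2 a5"
    "E a4 a3 = E a3 a4" "E a5 a3 = E a3 a5" "E a5 a4 = E a4 a5"
    "E a0 v = E v a0" "E a1 v = E v a1" "E a2 v = E v a2" "E a3 v = E v a3" "E a4 v = E v a4" "E a5 v = E v a5"
    using symE by blast+
  have n': "\<not> E a0 a2" "\<not> E a2 a4" "\<not> E a0 a4" "\<not> E a1 a3" "\<not> E a3 a5" "\<not> E a1 a5"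
    using n symE by blast+
  show False
  using x y z e
  apply (simp only: insert_iff empty_iff simp_thms)
  apply (elim disjE)
  apply (simp_all add: ord n' irr)
  apply (use v w in blast)+
  done
qed


lemma replace:
  assumes min: "minimal_r_system V E r Cs" and C: "C \<in> set Cs"
    and D: "chorded_cycle V E D"
    and out: "\<forall>x\<in>set D. x \<in> set C \<or> (\<forall>D'\<in>set Cs. x \<notin> set D')"
  shows "length C \<le> length D"
proof -
  obtain i where i: "i < length Cs" "Cs ! i = C" using C by (meson in_set_conv_nth)
  have rs: "r_system V E r Cs" and le: "\<And>Cs'. r_system V E r Cs' \<Longrightarrow> sum_list (map length Cs) \<le> sum_list (map length Cs')"
    using min unfolding minimal_r_system_def by auto
  define Cs' where "Cs' = Cs[i := D]"
  have lenr: "length Cs = r" using rs unfolding r_system_def by auto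
  have dis: "\<And>j l. j < r \<Longrightarrow> l < r \<Longrightarrow> j \<noteq> l \<Longrightarrow> set (Cs ! j) \<inter> set (Cs ! l) = {}"
    using rs unfolding r_system_def by auto
  have "r_system V E r Cs'"
    unfolding r_system_def
  proof (intro conjI allI impI ballI)
    show "length Cs' = r" using lenr Cs'_def by simp
  next
    fix X assume "X \<in> set Cs'"
    then have "X \<in> insert D (set Cs)" unfolding Cs'_def using set_update_subset_insert by fast
    then show "chorded_cycle V E X" using D rs unfolding r_system_def by auto
  next
    fix j l assume jl: "j < r" "l < r" "j \<noteq> l"
    have key: "set D \<inter> set (Cs ! l) = {}" if "l < r" "l \<noteq> i" for l
    proof -
      have "Cs ! l \<in> set Cs" using that lenr by simp
      moreover have "set C \<inter> set (Cs ! l) = {}" using dis[of i l] i that lenr by auto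
      ultimately show ?thesis using out by blast
    qed
    show "set (Cs' ! j) \<inter> set (Cs' ! l) = {}"
    proof (cases "j = i")
      case True then show ?thesis using key[of l] jl i lenr Cs'_def by auto
    next
      case False note jf = False
      show ?thesis
      proof (cases "l = i")
        case True then show ?thesis using key[of j] jl i lenr Cs'_def jf by auto
      next
        case False then show ?thesis using dis[of j l] jl jf Cs'_def by auto
      qed
    qed
  qed
  then have "sum_list (map length Cs) \<le> sum_list (map length Cs')" by (rule le)
  moreover have "sum_list (map length Cs') + length C = sum_list (map length Cs) + length D"
  proof -
    have "map length Cs' = (map length Cs)[i := length D]" unfolding Cs'_def by (simp add: map_update)
    moreover have "sum_list ((map length Cs)[i := length D]) + (map length Cs) ! i = sum_list (map length Cs) + length D"
      using i(1) by (induction Cs arbitrary: i) (auto split: nat.splits)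
    ultimately show ?thesis using i by simp
  qed
  ultimately show ?thesis by linarith
qed



lemma mod_inj_aux:
  fixes i t t' k :: nat
  assumes "t < k" "t' < k" "(i + t) mod k = (i + t') mod k"
  shows "t = t'"
proof (cases "t \<le> t'")
  case True
  then obtain s where "i + t' = i + t + k * s" using mod_eq_nat2E[OF assms(3)] by auto
  then have "t' = t + k * s" by simp
  then show ?thesis using assms(2) by (cases s) auto
next
  case False
  then obtain s where "i + t = i + t' + k * s" using mod_eq_nat1E[OF assms(3)] by auto
  then have "t = t' + k * s" by simp
  then show ?thesis using assms(1) by (cases s) auto
qed

lemma window:
  assumes cyc: "is_cycle V E C" and k: "k = length C" and ik: "i < k"
    and ab: "0 < a" "a < b" "b < k"
    and sym: "\<And>x y. E x y \<Longrightarrow> E y x"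
    and u: "u \<in> V" "u \<notin> set C"
    and e0: "E u (C ! i)" and e1: "E u (C ! ((i + a) mod k))" and e2: "E u (C ! ((i + b) mod k))"
  shows "chorded_cycle V E (u # map (\<lambda>t. C ! ((i + t) mod k)) [0..<b+1])"
    (is "chorded_cycle V E ?D")
proof -
  have kpos: "k > 0" using ik by simp
  have cyc': "length C \<ge> 3" "distinct C" "set C \<subseteq> V"
    "\<And>j. j < k \<Longrightarrow> E (C ! j) (C ! ((j + 1) mod k))"
    using cyc k unfolding is_cycle_def by auto
  have len: "length ?D = b + 2" by simp
  have nth: "\<And>t. t \<le> b \<Longrightarrow> ?D ! (Suc t) = C ! ((i + t) mod k)"
    by (simp del: upt_Suc add: nth_map_upt less_Suc_eq_le)
  have dist: "distinct ?D"
  proof -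
    have "distinct (map (\<lambda>t. C ! ((i + t) mod k)) [0..<b+1])"
    proof (rule distinct_map[THEN iffD2], intro conjI)
      show "inj_on (\<lambda>t. C ! ((i + t) mod k)) (set [0..<b + 1])"
      proof (rule inj_onI)
        fix x y assume xy: "x \<in> set [0..<b + 1]" "y \<in> set [0..<b + 1]"
          "C ! ((i + x) mod k) = C ! ((i + y) mod k)"
        then have "(i + x) mod k = (i + y) mod k"
          using cyc'(2) k kpos by (simp add: nth_eq_iff_index_eq)
        then show "x = y" using mod_inj_aux[of x k y i] xy ab by auto
      qed
    qed simp
    moreover have "u \<notin> set (map (\<lambda>t. C ! ((i + t) mod k)) [0..<b+1])"
      using u(2) k kpos by auto
    ultimately show ?thesis by simp
  qed
  have sub: "set ?D \<subseteq> V" using u cyc'(3) k kpos by auto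
  have edges: "\<forall>j < length ?D. E (?D ! j) (?D ! ((j + 1) mod length ?D))"
  proof (intro allI impI)
    fix j assume j: "j < length ?D"
    show "E (?D ! j) (?D ! ((j + 1) mod length ?D))"
    proof (cases j)
      case 0
      then show ?thesis using e0 nth[of 0] ik len by simp
    next
      case (Suc t)
      show ?thesis
      proof (cases "t = b")
        case True
        then have "(j + 1) mod length ?D = 0" using Suc len by simp
        then show ?thesis using Suc True nth[of b] sym[OF e2] by simp
      next
        case False
        then have tb: "t < b" using Suc j len by simp
        then have "(j + 1) mod length ?D = Suc (Suc t)" using Suc len by simp
        moreover have "?D ! Suc (Suc t) = C ! ((i + Suc t) mod k)" using nth[of "Suc t"] tb by simp
        moreover have "(i + Suc t) mod k = ((i + t) mod k + 1) mod k"
          by (simp add: mod_Suc_eq)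
        ultimately show ?thesis using Suc nth[of t] tb cyc'(4)[of "(i + t) mod k"] kpos by simp
      qed
    qed
  qed
  have chord: "E (?D ! 0) (?D ! (a + 1))" using e1 nth[of a] ab by simp
  have "idx_dist (length ?D) 0 (a + 1) \<ge> 2" using ab len by (simp add: idx_dist_def)
  then show ?thesis unfolding chorded_cycle_def is_cycle_def
    using dist sub edges chord len ab
    by (intro conjI; simp?; intro exI[of _ 0]; simp; intro exI[of _ "a+1"]; simp)
qed



lemma hex:
  assumes sym: "\<And>x y. E x y \<Longrightarrow> E y x" and irr: "\<And>x. \<not> E x x"
    and dst: "distinct [a0,a1,a2,a3,a4,a5]" and uC: "u \<notin> set [a0,a1,a2,a3,a4,a5]"
    and vC: "v \<notin> set [a0,a1,a2,a3,a4,a5]"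
    and inV: "set [a0,a1,a2,a3,a4,a5] \<subseteq> V" "u \<in> V" "v \<in> V"
    and c: "E a0 a1" "E a1 a2" "E a2 a3" "E a3 a4" "E a4 a5" "E a5 a0"
    and un: "E u a0" "E u a2" "E u a4" "\<not> E u a1" "\<not> E u a3" "\<not> E u a5"
    and min: "\<And>D. chorded_cycle V E D \<Longrightarrow> set D \<subseteq> insert u (insert v (set [a0,a1,a2,a3,a4,a5])) \<Longrightarrow> 6 \<le> length D"
  shows "triangle_free_on E (set [a0,a1,a2,a3,a4,a5] \<union> {v})"
proof -
  have m4: False
    if "distinct [a,b,c,d]" "set [a,b,c,d] \<subseteq> V" "E a b" "E b c" "E c d" "E d a" "E a c"
      "set [a,b,c,d] \<subseteq> insert u (insert v (set [a0,a1,a2,a3,a4,a5]))" for a b c d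
    using min[OF cyc4[OF that(1-7)] that(8)] by simp
  have m5: False
    if "distinct [a,b,c,d,e]" "set [a,b,c,d,e] \<subseteq> V" "E a b" "E b c" "E c d" "E d e" "E e a" "E b d"
      "set [a,b,c,d,e] \<subseteq> insert u (insert v (set [a0,a1,a2,a3,a4,a5]))" for a b c d e
    using min[OF cyc5[OF that(1-8)] that(9)] by simp
  have c': "E a1 a0" "E a2 a1" "E a3 a2" "E a4 a3" "E a5 a4" "E a0 a5" using c sym by blast+
  have un': "E a0 u" "E a2 u" "E a4 u" using un sym by blast+
  have vs: "E a0 v = E v a0" "E a1 v = E v a1" "E a2 v = E v a2" "E a3 v = E v a3" "E a4 v = E v a4" "E a5 v = E v a5"
    "E a3 a0 = E a0 a3" "E a4 a1 = E a1 a4" "E a5 a2 = E a2 a5" using sym by blast+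
  have d6: "a0 \<noteq> a1" "a0 \<noteq> a2" "a0 \<noteq> a3" "a0 \<noteq> a4" "a0 \<noteq> a5" "a1 \<noteq> a2" "a1 \<noteq> a3" "a1 \<noteq> a4" "a1 \<noteq> a5"
    "a2 \<noteq> a3" "a2 \<noteq> a4" "a2 \<noteq> a5" "a3 \<noteq> a4" "a3 \<noteq> a5" "a4 \<noteq> a5" using dst by auto
  have dsym: "a1 \<noteq> a0" "a2 \<noteq> a0" "a3 \<noteq> a0" "a4 \<noteq> a0" "a5 \<noteq> a0" "a2 \<noteq> a1" "a3 \<noteq> a1" "a4 \<noteq> a1" "a5 \<noteq> a1"
    "a3 \<noteq> a2" "a4 \<noteq> a2" "a5 \<noteq> a2" "a4 \<noteq> a3" "a5 \<noteq> a3" "a5 \<noteq> a4" using dst by auto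
  have uC': "u \<noteq> a0" "u \<noteq> a1" "u \<noteq> a2" "u \<noteq> a3" "u \<noteq> a4" "u \<noteq> a5"
     "a0 \<noteq> u" "a1 \<noteq> u" "a2 \<noteq> u" "a3 \<noteq> u" "a4 \<noteq> u" "a5 \<noteq> u" using uC by auto
  have vC': "v \<noteq> a0" "v \<noteq> a1" "v \<noteq> a2" "v \<noteq> a3" "v \<noteq> a4" "v \<noteq> a5"
     "a0 \<noteq> v" "a1 \<noteq> v" "a2 \<noteq> v" "a3 \<noteq> v" "a4 \<noteq> v" "a5 \<noteq> v" using vC by auto
  have iV: "a0 \<in> V" "a1 \<in> V" "a2 \<in> V" "a3 \<in> V" "a4 \<in> V" "a5 \<in> V" using inV by auto
  note F = d6 dsym uC' vC' iV inV(2,3) c c' un un' vs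
  have n02: "\<not> E a0 a2" by (rule notI, rule m4[of a0 a1 a2 u]) (simp_all add: F)
  have n24: "\<not> E a2 a4" by (rule notI, rule m4[of a2 a3 a4 u]) (simp_all add: F)
  have n40: "\<not> E a4 a0" by (rule notI, rule m4[of a4 a5 a0 u]) (simp_all add: F)
  have n13: "\<not> E a1 a3" by (rule notI, rule m5[of u a2 a1 a3 a4]) (simp_all add: F)
  have n35: "\<not> E a3 a5" by (rule notI, rule m5[of u a4 a3 a5 a0]) (simp_all add: F)
  have n51: "\<not> E a5 a1" by (rule notI, rule m5[of u a0 a5 a1 a2]) (simp_all add: F)
  have uv1: "v \<noteq> u" if "E v a1" using that un by auto
  have uv3: "v \<noteq> u" if "E v a3" using that un by auto
  have uv5: "v \<noteq> u" if "E v a5" using that un by auto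
  have v01: "\<not> (E v a0 \<and> E v a1)"
    by (rule notI, erule conjE, frule uv1, rule m5[of u a0 v a1 a2]) (simp_all add: F)
  have v12: "\<not> (E v a1 \<and> E v a2)"
    by (rule notI, erule conjE, frule uv1, rule m5[of a0 a1 v a2 u]) (simp_all add: F)
  have v23: "\<not> (E v a2 \<and> E v a3)"
    by (rule notI, erule conjE, frule uv3, rule m5[of u a2 v a3 a4]) (simp_all add: F)
  have v34: "\<not> (E v a3 \<and> E v a4)"
    by (rule notI, erule conjE, frule uv3, rule m5[of a2 a3 v a4 u]) (simp_all add: F)
  have v45: "\<not> (E v a4 \<and> E v a5)"
    by (rule notI, erule conjE, frule uv5, rule m5[of u a4 v a5 a0]) (simp_all add: F)
  have v50: "\<not> (E v a5 \<and> E v a0)"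
    by (rule notI, erule conjE, frule uv5, rule m5[of a4 a5 v a0 u]) (simp_all add: F)
  have w03: "\<not> (E v a0 \<and> E v a3 \<and> E a0 a3)"
    by (rule notI, elim conjE, rule m5[of a2 a3 v a0 a1]) (simp_all add: F)
  have w14: "\<not> (E v a1 \<and> E v a4 \<and> E a1 a4)"
    by (rule notI, elim conjE, rule m5[of a3 a4 v a1 a2]) (simp_all add: F)
  have w25: "\<not> (E v a2 \<and> E v a5 \<and> E a2 a5)"
    by (rule notI, elim conjE, rule m5[of a4 a5 v a2 a3]) (simp_all add: F)
  show ?thesis unfolding triangle_free_on_def
  proof (intro notI, elim bexE conjE)
    fix x y z assume xyz: "x \<in> set [a0,a1,a2,a3,a4,a5] \<union> {v}" "y \<in> set [a0,a1,a2,a3,a4,a5] \<union> {v}"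
      "z \<in> set [a0,a1,a2,a3,a4,a5] \<union> {v}" "E x y" "E y z" "E x z"
    have symE: "\<And>x y. E x y = E y x" using sym by blast
    show False
      by (rule tri[of E a0 a2 a4 a1 a3 a5 v x y z, OF symE irr n02 n24 n40 n13 n35 n51
          v01 v12 v23 v34 v45 v50 w03 w14 w25]) (use xyz in auto)
  qed
qed



lemma cyc_dist_nth:
  assumes "distinct C" "i < length C" "j < length C"
  shows "cyc_dist C (C ! i) (C ! j) = idx_dist (length C) i j"
proof -
  have "(THE i'. i' < length C \<and> C ! i' = C ! i) = i"
    using assms by (intro the_equality) (auto simp: nth_eq_iff_index_eq)
  moreover have "(THE j'. j' < length C \<and> C ! j' = C ! j) = j"
    using assms by (intro the_equality) (auto simp: nth_eq_iff_index_eq)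
  ultimately show ?thesis unfolding cyc_dist_def by simp
qed

lemma len6_cases:
  assumes "length C = 6"
  shows "C = [C!0, C!1, C!2, C!3, C!4, C!5]"
  using assms by (intro nth_equalityI) (auto simp: less_Suc_eq numeral_eq_Suc)

theorem lemma3p2:
  fixes V :: "'a set" and E :: "'a \<Rightarrow> 'a \<Rightarrow> bool" and r :: nat
    and Cs :: "'a list list" and C :: "'a list" and u :: 'a
  assumes "simple_graph V E"
    and "r \<ge> 1"
    and "minimal_r_system V E r Cs"
    and "C \<in> set Cs"
    and "u \<in> V"
    and "\<forall>D \<in> set Cs. u \<notin> set D"
    and "card (nbhd_on E C u) \<ge> 3"
  shows "(length C = 4 \<and> card (nbhd_on E C u) \<in> {3, 4})
       \<or> (length C = 5 \<and> card (nbhd_on E C u) = 3 \<and>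
          (\<exists>a b c. nbhd_on E C u = {a, b, c} \<and> a \<noteq> b \<and> a \<noteq> c \<and> b \<noteq> c
                  \<and> cyc_dist C a c = 2 \<and> cyc_dist C b c = 2))
       \<or> (length C = 6 \<and> card (nbhd_on E C u) = 3 \<and>
          (\<forall>v \<in> V. (\<forall>D \<in> set Cs. v \<notin> set D) \<longrightarrow> triangle_free_on E (set C \<union> {v})))"
proof -
  note sg = assms(1)[unfolded simple_graph_def]
  have sym: "\<And>x y. E x y \<Longrightarrow> E y x" and irr: "\<And>x. \<not> E x x" using sg by auto
  have chC: "chorded_cycle V E C" using assms(3,4) unfolding minimal_r_system_def r_system_def by auto
  then have cyc: "is_cycle V E C" unfolding chorded_cycle_def by auto
  define k where "k = length C"
  have dC: "distinct C" and CV: "set C \<subseteq> V" and k3: "k \<ge> 3" using cyc unfolding is_cycle_def k_def by auto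
  have uC: "u \<notin> set C" using assms(4,6) by auto
  have k4: "k \<ge> 4"
  proof (rule ccontr)
    assume "\<not> k \<ge> 4"
    then have "k = 3" using k3 by simp
    moreover obtain i j where "i < k" "j < k" "idx_dist k i j \<ge> 2"
      using chC unfolding chorded_cycle_def k_def by auto
    ultimately show False by (auto simp: idx_dist_def Let_def split: if_splits)
  qed
  define P where "P = {i. i < k \<and> E u (C ! i)}"
  have finP: "finite P" and Pk: "\<And>i. i \<in> P \<Longrightarrow> i < k" unfolding P_def by auto
  have nb: "nbhd_on E C u = (\<lambda>i. C ! i) ` P"
    unfolding nbhd_on_def P_def k_def by (auto simp: in_set_conv_nth)
  have cardP: "card (nbhd_on E C u) = card P"
    unfolding nb by (rule card_image) (use dC Pk k_def in \<open>auto simp: inj_on_def nth_eq_iff_index_eq\<close>)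
  have short: "k \<le> length D" if "chorded_cycle V E D" "set D \<subseteq> insert u (set C)" for D
    unfolding k_def using replace[OF assms(3,4) that(1)] that(2) assms(6) by blast
  have gapW: "k \<le> b + 2" if "i < k" "0 < a" "a < b" "b < k" "i \<in> P" "(i + a) mod k \<in> P" "(i + b) mod k \<in> P"
    for i a b
  proof -
    have "chorded_cycle V E (u # map (\<lambda>t. C ! ((i + t) mod k)) [0..<b+1])"
      by (rule window[OF cyc k_def that(1-4) sym assms(5) uC]) (use that in \<open>auto simp: P_def\<close>)
    moreover have "set (u # map (\<lambda>t. C ! ((i + t) mod k)) [0..<b+1]) \<subseteq> insert u (set C)"
    proof -
      have "\<And>t. C ! ((i + t) mod k) \<in> set C" using k4 unfolding k_def by (intro nth_mem mod_less_divisor) auto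
      then show ?thesis by auto
    qed
    ultimately have "k \<le> length (u # map (\<lambda>t. C ! ((i + t) mod k)) [0..<b+1])" by (rule short)
    then show ?thesis by simp
  qed
  have gap3: "k + p \<le> s + 2 \<and> q \<le> p + 2 \<and> s \<le> q + 2"
    if "p < q" "q < s" "s < k" "p \<in> P" "q \<in> P" "s \<in> P" for p q s
  proof (intro conjI)
    have "k \<le> (s - p) + 2" by (rule gapW[of p "q - p" "s - p"]) (use that in auto)
    then show "k + p \<le> s + 2" using that by linarith
    have "(q + (k - q + p)) mod k = p" using that by simp
    then have "k \<le> (k - q + p) + 2" by (intro gapW[of q "s - q" "k - q + p"]) (use that in auto)
    then show "q \<le> p + 2" using that by linarith
    have "(s + (k - s + p)) mod k = p" "(s + (k - s + q)) mod k = q" using that by simp_all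
    then have "k \<le> (k - s + q) + 2" by (intro gapW[of s "k - s + p" "k - s + q"]) (use that in auto)
    then show "s \<le> q + 2" using that by linarith
  qed
  define xs where "xs = sorted_list_of_set P"
  have xsP: "set xs = P" and lxs: "length xs = card P" and sxs: "sorted_wrt (<) xs"
    using finP unfolding xs_def by (auto)
  have xlt: "xs ! i < xs ! j" if "i < j" "j < length xs" for i j
    using sorted_wrt_nth_less[OF sxs that] .
  have xin: "xs ! i \<in> P" if "i < length xs" for i using that xsP nth_mem by blast
  have c3: "card P \<ge> 3" using assms(7) cardP by simp
  have cnb_le: "card (nbhd_on E C u) \<le> k"
  proof -
    have "card (nbhd_on E C u) \<le> card (set C)"
      by (rule card_mono) (auto simp: nbhd_on_def)
    then show ?thesis using distinct_card[OF dC] k_def by simp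
  qed
  show ?thesis
  proof (cases "card P \<ge> 4")
    case True
    have "k \<le> 4"
      using gap3[of "xs!0" "xs!1" "xs!2"] gap3[of "xs!0" "xs!1" "xs!3"]
        gap3[of "xs!0" "xs!2" "xs!3"] gap3[of "xs!1" "xs!2" "xs!3"]
        xlt[of 0 1] xlt[of 1 2] xlt[of 2 3] xin[of 0] xin[of 1] xin[of 2] xin[of 3]
        Pk[of "xs!3"] True lxs by simp
    then have "k = 4" using k4 by simp
    then show ?thesis using cnb_le assms(7) k_def by auto
  next
    case False
    then have cP: "card P = 3" using c3 by simp
    define p where "p = xs ! 0"
    define q where "q = xs ! 1"
    define s where "s = xs ! 2"
    have pqs: "p < q" "q < s" "s < k" "p \<in> P" "q \<in> P" "s \<in> P"
      using xlt[of 0 1] xlt[of 1 2] xin[of 0] xin[of 1] xin[of 2] Pk[of s] lxs cP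
      unfolding p_def q_def s_def by auto
    have xs3: "xs = [p, q, s]"
      using lxs cP unfolding p_def q_def s_def
      by (intro nth_equalityI) (auto simp: less_Suc_eq numeral_eq_Suc)
    have Peq: "P = {p, q, s}" using xsP xs3 by simp
    have g: "k + p \<le> s + 2" "q \<le> p + 2" "s \<le> q + 2" using gap3[OF pqs] by auto
    have nbeq: "nbhd_on E C u = {C ! p, C ! q, C ! s}" using nb Peq by simp
    have dist3: "C ! p \<noteq> C ! q" "C ! p \<noteq> C ! s" "C ! q \<noteq> C ! s"
      using pqs dC k_def by (auto simp: nth_eq_iff_index_eq)
    have cd: "\<And>i j. i < k \<Longrightarrow> j < k \<Longrightarrow> cyc_dist C (C ! i) (C ! j) = idx_dist k i j"
      using cyc_dist_nth[OF dC] k_def by simp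
    have "k = 4 \<or> k = 5 \<or> k = 6" using g pqs k4 by linarith
    then show ?thesis
    proof (elim disjE)
      assume "k = 4" then show ?thesis using cP cardP k_def by simp
    next
      assume k5: "k = 5"
      have "\<exists>a b c. nbhd_on E C u = {a, b, c} \<and> a \<noteq> b \<and> a \<noteq> c \<and> b \<noteq> c
                  \<and> cyc_dist C a c = 2 \<and> cyc_dist C b c = 2"
      proof -
        consider "q = p + 1" "s = q + 2" | "q = p + 2" "s = q + 1" | "q = p + 2" "s = q + 2"
          using g pqs k5 by linarith
        then show ?thesis
        proof cases
          case 1
          then show ?thesis using cd[of p s] cd[of q s] pqs k5 nbeq dist3
            by (intro exI[of _ "C!p"] exI[of _ "C!q"] exI[of _ "C!s"]) (auto simp: idx_dist_def)
        next
          case 2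
          then show ?thesis using cd[of q p] cd[of s p] pqs k5 nbeq dist3
            by (intro exI[of _ "C!q"] exI[of _ "C!s"] exI[of _ "C!p"]) (auto simp: idx_dist_def)
        next
          case 3
          then show ?thesis using cd[of p q] cd[of s q] pqs k5 nbeq dist3
            by (intro exI[of _ "C!p"] exI[of _ "C!s"] exI[of _ "C!q"]) (auto simp: idx_dist_def)
        qed
      qed
      then show ?thesis using k5 cP cardP k_def by simp
    next
      assume k6: "k = 6"
      have qs: "q = p + 2" "s = p + 4" "p \<le> 1" using g pqs k6 by linarith+
      have Cl: "C = [C!0, C!1, C!2, C!3, C!4, C!5]" using len6_cases k6 k_def by simp
      have inP: "\<And>i. i < 6 \<Longrightarrow> E u (C ! i) \<longleftrightarrow> i \<in> P" using k6 unfolding P_def by auto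
      have tf: "triangle_free_on E (set C \<union> {v})"
        if v: "v \<in> V" "\<forall>D \<in> set Cs. v \<notin> set D" for v
      proof -
        have vC: "v \<notin> set C" using v assms(4) by auto
        have mn: "6 \<le> length D" if "chorded_cycle V E D" "set D \<subseteq> insert u (insert v (set C))" for D
        proof -
          have "\<forall>x\<in>set D. x \<in> set C \<or> (\<forall>D'\<in>set Cs. x \<notin> set D')"
            using that(2) assms(6) v by blast
          then show ?thesis using replace[OF assms(3,4) that(1)] k6 k_def by simp
        qed
        have ce: "\<And>j. j < 6 \<Longrightarrow> E (C ! j) (C ! ((j + 1) mod 6))"
          using cyc k6 k_def unfolding is_cycle_def by auto
        have ce': "E (C!0) (C!1)" "E (C!1) (C!2)" "E (C!2) (C!3)" "E (C!3) (C!4)" "E (C!4) (C!5)" "E (C!5) (C!0)"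
          
        proof -
          have m: "((0::nat) + 1) mod 6 = 1" "((1::nat) + 1) mod 6 = 2" "((2::nat) + 1) mod 6 = 3"
            "((3::nat) + 1) mod 6 = 4" "((4::nat) + 1) mod 6 = 5" "((5::nat) + 1) mod 6 = 0" by simp_all
          show "E (C!0) (C!1)" using ce[of 0, unfolded m(1)] by simp
          show "E (C!1) (C!2)" using ce[of 1, unfolded m(2)] by simp
          show "E (C!2) (C!3)" using ce[of 2, unfolded m(3)] by simp
          show "E (C!3) (C!4)" using ce[of 3, unfolded m(4)] by simp
          show "E (C!4) (C!5)" using ce[of 4, unfolded m(5)] by simp
          show "E (C!5) (C!0)" using ce[of 5, unfolded m(6)] by simp
        qed
        have setC: "set C = set [C!0, C!1, C!2, C!3, C!4, C!5]" using Cl by (metis)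
        have dl: "distinct [C!0, C!1, C!2, C!3, C!4, C!5]" using dC Cl by metis
        from qs consider "p = 0" | "p = 1" by linarith
        then show ?thesis
        proof cases
          case 1
          then have Pe: "P = {0, 2, 4}" using Peq qs by (simp add: numeral_eq_Suc)
          have un: "E u (C!0)" "E u (C!2)" "E u (C!4)" "\<not> E u (C!1)" "\<not> E u (C!3)" "\<not> E u (C!5)"
            using inP[of 0] inP[of 1] inP[of 2] inP[of 3] inP[of 4] inP[of 5] Pe by simp_all
          show ?thesis unfolding setC
            by (rule hex[OF sym irr dl _ _ _ assms(5) v(1) ce' un])
              (use uC vC CV mn in \<open>simp_all only: setC[symmetric] not_False_eq_True\<close>)
        next
          case 2
          then have Pe: "P = {1, 3, 5}" using Peq qs by (simp add: numeral_eq_Suc)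
          have un: "E u (C!1)" "E u (C!3)" "E u (C!5)" "\<not> E u (C!2)" "\<not> E u (C!4)" "\<not> E u (C!0)"
            using inP[of 0] inP[of 1] inP[of 2] inP[of 3] inP[of 4] inP[of 5] Pe by simp_all
          have setC': "set C = set [C!1, C!2, C!3, C!4, C!5, C!0]" using setC by auto
          have dl': "distinct [C!1, C!2, C!3, C!4, C!5, C!0]" using dl by auto
          show ?thesis unfolding setC'
            by (rule hex[OF sym irr dl' _ _ _ assms(5) v(1) ce'(2-6) ce'(1) un])
              (use uC vC CV mn in \<open>simp_all only: setC'[symmetric] not_False_eq_True\<close>)
        qed
      qed
      then show ?thesis using k6 cP cardP k_def by simp
    qed
  qed
qed

end
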